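(* For each positive integer $i$ let $\mathcal{F}_i$ be an edge-coloured digraph with $i$ vertices all of whose edges are double. For each composition $\alpha=(\alpha_1,\dots,\alpha_k)\vDash n$, let $\mathcal{F}_\alpha$ be the solid sum $\mathcal{F}_{\alpha_1}\ \text{solid-sum}\ \mathcal{F}_{\alpha_2}\ \text{solid-sum}\cdots\text{solid-sum}\ \mathcal{F}_{\alpha_k}$. Then $\{\mathscr{X}_{\mathcal{F}_\alpha}(x):\alpha\vDash n\}$ is a basis of $\mathrm{QSym}_n(x)$.
   Context: An edge-coloured digraph is a finite simple digraph with each edge of type dashed, solid ($a\rightarrow b$) or double ($a\Rightarrow b$). The solid sum of $G_1$ and $G_2$ is their disjoint union together with a solid edge $(a,b)$ for every $a\in V(G_1)$, $b\in V(G_2)$ (this operation is associative). A proper vertex-colouring is $\kappa:V\to\mathbb{P}$ with $\kappa(a)\ne\kappa(b)$, $\kappa(a)<\kappa(b)$, $\kappa(a)\le\kappa(b)$ for dashed, solid, double edges $(a,b)$ respectively, and $\mathscr{X}_G(x)=\sum_\kappa\prod_{a\in V(G)}x_{\kappa(a)}$ over proper vertex-colourings, in commuting variables. $\mathrm{QSym}_n(x)$ is the space of quasisymmetric functions homogeneous of degree $n$ (formal power series such that for each composition $(\beta_1,\dots,\beta_k)$ of $n$ all monomials $x_{i_1}^{\beta_1}\cdots x_{i_k}^{\beta_k}$ with $i_1<\dots<i_k$ have the same coefficient, and no other monomials occur). *)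

theory Defs
  imports Complex_Main "HOL-Library.FuncSet"
begin

datatype ecol = Dashed | Solid | Double

text \<open>An edge-coloured digraph on vertex type 'v: a vertex set together with a
partial edge-colouring; E a b = Some c means there is an edge (a,b) of type c.\<close>
type_synonym 'v ecdigraph = "'v set \<times> ('v \<Rightarrow> 'v \<Rightarrow> ecol option)"

definition verts :: "'v ecdigraph \<Rightarrow> 'v set" where "verts G = fst G"
definition edge :: "'v ecdigraph \<Rightarrow> 'v \<Rightarrow> 'v \<Rightarrow> ecol option" where "edge G = snd G"

definition ecdigraph :: "'v ecdigraph \<Rightarrow> bool" where
  "ecdigraph G \<longleftrightarrow> finite (verts G) \<and>
     (\<forall>a b. edge G a b \<noteq> None \<longrightarrow> a \<in> verts G \<and> b \<in> verts G \<and> a \<noteq> b)"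

text \<open>Iterated solid sum G_1 solid-sum ... solid-sum G_k of a list of graphs
(well defined by associativity); block j's vertices are tagged with j.\<close>
definition solid_sum_list :: "'v ecdigraph list \<Rightarrow> (nat \<times> 'v) ecdigraph" where
  "solid_sum_list Gs =
     (let V = {(j, v). j < length Gs \<and> v \<in> verts (Gs ! j)} in
      (V, \<lambda>(j, a) (j', b).
            if (j, a) \<in> V \<and> (j', b) \<in> V then
              (if j = j' then edge (Gs ! j) a b
               else if j < j' then Some Solid else None)
            else None))"

definition proper_colouring :: "'v ecdigraph \<Rightarrow> ('v \<Rightarrow> nat) \<Rightarrow> bool" where
  "proper_colouring G \<kappa> \<longleftrightarrow> (\<forall>a \<in> verts G. \<kappa> a \<ge> 1) \<and>
     (\<forall>a b. (edge G a b = Some Dashed \<longrightarrow> \<kappa> a \<noteq> \<kappa> b) \<and>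
            (edge G a b = Some Solid \<longrightarrow> \<kappa> a < \<kappa> b) \<and>
            (edge G a b = Some Double \<longrightarrow> \<kappa> a \<le> \<kappa> b))"

text \<open>Formal power series in commuting variables x_1, x_2, ... with rational
coefficients: a function from exponent vectors m (m i = exponent of x_i) to
coefficients.\<close>
type_synonym fps_x = "(nat \<Rightarrow> nat) \<Rightarrow> rat"

definition monomial :: "(nat \<Rightarrow> nat) \<Rightarrow> bool" where
  "monomial m \<longleftrightarrow> finite {i. m i \<noteq> 0} \<and> m 0 = 0"

definition chromX :: "'v ecdigraph \<Rightarrow> fps_x" where
  "chromX G m = of_nat (card {\<kappa> \<in> verts G \<rightarrow>\<^sub>E UNIV. proper_colouring G \<kappa> \<and>
        (\<forall>j. card {a \<in> verts G. \<kappa> a = j} = m j)})"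

definition flat :: "(nat \<Rightarrow> nat) \<Rightarrow> nat list" where
  "flat m = map m (sorted_list_of_set {i. m i \<noteq> 0})"

definition compositions :: "nat \<Rightarrow> nat list set" where
  "compositions n = {\<alpha>. (\<forall>a \<in> set \<alpha>. 0 < a) \<and> sum_list \<alpha> = n}"

definition QSym :: "nat \<Rightarrow> fps_x set" where
  "QSym n = {f. (\<forall>m. f m \<noteq> 0 \<longrightarrow> monomial m \<and> flat m \<in> compositions n) \<and>
                (\<forall>m m'. monomial m \<and> monomial m' \<and> flat m = flat m' \<and> flat m \<in> compositions n
                        \<longrightarrow> f m = f m')}"

definition is_QSym_basis :: "nat \<Rightarrow> (nat list \<Rightarrow> fps_x) \<Rightarrow> bool" where
  "is_QSym_basis n B \<longleftrightarrow>
     (\<forall>\<alpha> \<in> compositions n. B \<alpha> \<in> QSym n) \<and>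
     (\<forall>c. (\<forall>m. (\<Sum>\<alpha>\<in>compositions n. c \<alpha> * B \<alpha> m) = 0) \<longrightarrow> (\<forall>\<alpha>\<in>compositions n. c \<alpha> = 0)) \<and>
     (\<forall>f \<in> QSym n. \<exists>c. \<forall>m. f m = (\<Sum>\<alpha>\<in>compositions n. c \<alpha> * B \<alpha> m))"

end

theory Submission
  imports Defs
begin



definition colset :: "'v ecdigraph \<Rightarrow> (nat \<Rightarrow> nat) \<Rightarrow> ('v \<Rightarrow> nat) set" where
  "colset G m = {\<kappa> \<in> verts G \<rightarrow>\<^sub>E UNIV. proper_colouring G \<kappa> \<and>
        (\<forall>j. card {a \<in> verts G. \<kappa> a = j} = m j)}"

lemma chromX_colset: "chromX G m = of_nat (card (colset G m))"
  unfolding chromX_def colset_def by simp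

lemma colset_range:
  assumes "finite (verts G)" "\<kappa> \<in> colset G m" "a \<in> verts G"
  shows "m (\<kappa> a) \<noteq> 0"
proof -
  have "card {b \<in> verts G. \<kappa> b = \<kappa> a} = m (\<kappa> a)" using assms(2) unfolding colset_def by auto
  moreover have "card {b \<in> verts G. \<kappa> b = \<kappa> a} \<noteq> 0" using assms by auto
  ultimately show ?thesis by simp
qed

lemma colset_finite:
  assumes "finite (verts G)" "monomial m"
  shows "finite (colset G m)"
proof -
  have "colset G m \<subseteq> verts G \<rightarrow>\<^sub>E {i. m i \<noteq> 0}"
  proof
    fix \<kappa> assume k: "\<kappa> \<in> colset G m"
    hence "\<kappa> \<in> verts G \<rightarrow>\<^sub>E UNIV" unfolding colset_def by auto
    thus "\<kappa> \<in> verts G \<rightarrow>\<^sub>E {i. m i \<noteq> 0}" using colset_range[OF assms(1) k] by (auto simp: PiE_iff)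
  qed
  moreover have "finite (verts G \<rightarrow>\<^sub>E {i. m i \<noteq> 0})"
    using assms unfolding monomial_def by (intro finite_PiE) auto
  ultimately show ?thesis by (rule finite_subset)
qed

lemma sorted_nth_less_iff:
  assumes "sorted_wrt (<) (xs::nat list)" "i < length xs" "j < length xs"
  shows "xs ! i < xs ! j \<longleftrightarrow> i < j"
  using assms sorted_wrt_nth_less
  by (metis linorder_neq_iff order_less_asym)

lemma transfer_le:
  assumes fin: "finite (verts G)"
    and E: "\<And>a b. edge G a b \<noteq> None \<Longrightarrow> a \<in> verts G \<and> b \<in> verts G"
    and mm: "monomial m" and mm': "monomial m'" and fl: "flat m = flat m'"
  shows "card (colset G m) \<le> card (colset G m')"
proof -
  define S where "S = {i. m i \<noteq> 0}"
  define S' where "S' = {i. m' i \<noteq> 0}"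
  define xs where "xs = sorted_list_of_set S"
  define ys where "ys = sorted_list_of_set S'"
  have finS: "finite S" and finS': "finite S'" using mm mm' unfolding monomial_def S_def S'_def by auto
  have sx: "sorted_wrt (<) xs" and sy: "sorted_wrt (<) ys"
    unfolding xs_def ys_def by (simp_all add: strict_sorted_list_of_set)
  have dx: "distinct xs" unfolding xs_def by simp
  have dy: "distinct ys" unfolding ys_def by simp
  have setx: "set xs = S" and sety: "set ys = S'" unfolding xs_def ys_def using finS finS' by auto
  have mapeq: "map m xs = map m' ys" using fl unfolding flat_def xs_def ys_def S_def S'_def by simp
  hence len: "length xs = length ys" by (metis length_map)
  have mn: "\<And>i. i < length xs \<Longrightarrow> m (xs ! i) = m' (ys ! i)"
    using mapeq len by (metis nth_map)
  define \<phi> where "\<phi> = (\<lambda>x. the (map_of (zip xs ys) x))"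
  have phi: "\<And>i. i < length xs \<Longrightarrow> \<phi> (xs ! i) = ys ! i"
    unfolding \<phi>_def using map_of_zip_nth[OF len dx] len by simp
  have inS: "\<And>x. x \<in> S \<Longrightarrow> \<exists>i<length xs. x = xs ! i" using setx by (metis in_set_conv_nth)
  have phiS: "\<And>x. x \<in> S \<Longrightarrow> \<phi> x \<in> S'"
    using inS phi sety len by (metis nth_mem)
  have phimono: "\<And>x y. x \<in> S \<Longrightarrow> y \<in> S \<Longrightarrow> \<phi> x < \<phi> y \<longleftrightarrow> x < y"
  proof -
    fix x y assume "x \<in> S" "y \<in> S"
    then obtain i j where "i < length xs" "x = xs ! i" "j < length xs" "y = xs ! j" using inS by blast
    thus "\<phi> x < \<phi> y \<longleftrightarrow> x < y" using phi sorted_nth_less_iff[OF sx] sorted_nth_less_iff[OF sy] len by simp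
  qed
  have phiinj: "\<And>x y. x \<in> S \<Longrightarrow> y \<in> S \<Longrightarrow> \<phi> x = \<phi> y \<longleftrightarrow> x = y"
    using phimono by (metis linorder_neq_iff)
  have phile: "\<And>x y. x \<in> S \<Longrightarrow> y \<in> S \<Longrightarrow> \<phi> x \<le> \<phi> y \<longleftrightarrow> x \<le> y"
    using phimono by (meson not_le)
  have S'0: "0 \<notin> S'" using mm' unfolding monomial_def S'_def by auto
  define h where "h = (\<lambda>\<kappa>. restrict (\<lambda>a. \<phi> (\<kappa> a)) (verts G))"
  have kS: "\<And>\<kappa> a. \<kappa> \<in> colset G m \<Longrightarrow> a \<in> verts G \<Longrightarrow> \<kappa> a \<in> S"
    using colset_range[OF fin] unfolding S_def by auto
  have hin: "h \<kappa> \<in> colset G m'" if k: "\<kappa> \<in> colset G m" for \<kappa>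
  proof -
    have pk: "proper_colouring G \<kappa>" and ck: "\<And>j. card {a \<in> verts G. \<kappa> a = j} = m j"
      using k unfolding colset_def by auto
    have p: "proper_colouring G (h \<kappa>)"
      unfolding proper_colouring_def
    proof (intro conjI allI ballI)
      fix a assume "a \<in> verts G"
      then have "\<phi> (\<kappa> a) \<in> S'" using phiS kS k by blast
      then show "1 \<le> h \<kappa> a" using S'0 \<open>a \<in> verts G\<close> unfolding h_def
        by (metis not_less_eq_eq restrict_apply' le0 le_antisym One_nat_def)
    next
      fix a b
      show "edge G a b = Some Dashed \<longrightarrow> h \<kappa> a \<noteq> h \<kappa> b"
        using E[of a b] pk kS[OF k] phiinj unfolding proper_colouring_def h_def by auto
      show "edge G a b = Some Solid \<longrightarrow> h \<kappa> a < h \<kappa> b"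
        using E[of a b] pk kS[OF k] phimono unfolding proper_colouring_def h_def by auto
      show "edge G a b = Some Double \<longrightarrow> h \<kappa> a \<le> h \<kappa> b"
        using E[of a b] pk kS[OF k] phile unfolding proper_colouring_def h_def by auto
    qed
    have c: "card {a \<in> verts G. h \<kappa> a = j} = m' j" for j
    proof (cases "j \<in> S'")
      case True
      then obtain i where i: "i < length xs" "j = ys ! i" using sety len by (metis in_set_conv_nth)
      have "{a \<in> verts G. h \<kappa> a = j} = {a \<in> verts G. \<kappa> a = xs ! i}"
      proof -
        have "\<phi> (\<kappa> a) = \<phi> (xs ! i) \<longleftrightarrow> \<kappa> a = xs ! i" if "a \<in> verts G" for a
          using phiinj kS[OF k that] i setx by (metis nth_mem)
        thus ?thesis using i phi unfolding h_def by auto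
      qed
      thus ?thesis using ck mn i by simp
    next
      case False
      have "{a \<in> verts G. h \<kappa> a = j} = {}" using False phiS kS[OF k] unfolding h_def by auto
      moreover have "m' j = 0" using False S'_def by simp
      ultimately show ?thesis by (metis card.empty)
    qed
    show ?thesis unfolding colset_def using p c unfolding h_def by auto
  qed
  have inj: "inj_on h (colset G m)"
  proof
    fix k1 k2 assume k1: "k1 \<in> colset G m" and k2: "k2 \<in> colset G m" and eq: "h k1 = h k2"
    show "k1 = k2"
    proof (rule PiE_ext)
      show "k1 \<in> verts G \<rightarrow>\<^sub>E UNIV" "k2 \<in> verts G \<rightarrow>\<^sub>E UNIV" using k1 k2 unfolding colset_def by auto
      fix a assume a: "a \<in> verts G"
      have "\<phi> (k1 a) = \<phi> (k2 a)" using eq a unfolding h_def by (metis restrict_apply')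
      thus "k1 a = k2 a" using phiinj kS[OF k1 a] kS[OF k2 a] by blast
    qed
  qed
  show ?thesis
    by (rule card_inj_on_le[OF inj]) (use hin colset_finite[OF fin mm'] in auto)
qed




lemma colset_mono:
  assumes fin: "finite (verts G)" and k: "\<kappa> \<in> colset G m"
  shows "monomial m \<and> flat m \<in> compositions (card (verts G))"
proof -
  have pk: "proper_colouring G \<kappa>" and ck: "\<And>j. card {a \<in> verts G. \<kappa> a = j} = m j"
    using k unfolding colset_def by auto
  have supp: "{j. m j \<noteq> 0} = \<kappa> ` verts G"
  proof (intro set_eqI iffI)
    fix j assume "j \<in> {j. m j \<noteq> 0}"
    hence "card {a \<in> verts G. \<kappa> a = j} \<noteq> 0" using ck[of j] by simp
    hence "{a \<in> verts G. \<kappa> a = j} \<noteq> {}" by (metis card.empty)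
    thus "j \<in> \<kappa> ` verts G" by auto
  next
    fix j assume "j \<in> \<kappa> ` verts G"
    thus "j \<in> {j. m j \<noteq> 0}" using colset_range[OF fin k] by auto
  qed
  have m0: "m 0 = 0"
  proof -
    have "{a \<in> verts G. \<kappa> a = 0} = {}" using pk unfolding proper_colouring_def by fastforce
    thus ?thesis using ck[of 0] by (metis card.empty)
  qed
  have mono: "monomial m" unfolding monomial_def using supp fin m0 by simp
  have "sum_list (flat m) = sum m (\<kappa> ` verts G)"
    unfolding flat_def supp by (simp add: sum_list_distinct_conv_sum_set fin)
  also have "\<dots> = (\<Sum>j\<in>\<kappa> ` verts G. card {a \<in> verts G. \<kappa> a = j})" using ck by simp
  also have "\<dots> = card (verts G)"
    using sum.image_gen[OF fin, of "\<lambda>_. 1::nat" \<kappa>] by simp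
  finally have s: "sum_list (flat m) = card (verts G)" .
  have "\<forall>a\<in>set (flat m). 0 < a" unfolding flat_def supp using fin colset_range[OF fin k] by auto
  with s mono show ?thesis unfolding compositions_def by auto
qed

lemma chromX_QSym:
  assumes fin: "finite (verts G)"
    and E: "\<And>a b. edge G a b \<noteq> None \<Longrightarrow> a \<in> verts G \<and> b \<in> verts G"
  shows "chromX G \<in> QSym (card (verts G))"
  unfolding QSym_def mem_Collect_eq
proof (rule conjI; intro allI impI)
  fix m assume "chromX G m \<noteq> 0"
  hence "colset G m \<noteq> {}" unfolding chromX_colset by auto
  thus "monomial m \<and> flat m \<in> compositions (card (verts G))" using colset_mono[OF fin] by blast
next
  fix m m' assume h: "monomial m \<and> monomial m' \<and> flat m = flat m' \<and> flat m \<in> compositions (card (verts G))"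
  have "card (colset G m) \<le> card (colset G m')" using transfer_le[OF fin E, of m m'] h by simp
  moreover have "card (colset G m') \<le> card (colset G m)" using transfer_le[OF fin E, of m' m] h by simp
  ultimately show "chromX G m = chromX G m'" unfolding chromX_colset by simp
qed

definition mono_of :: "nat list \<Rightarrow> nat \<Rightarrow> nat" where
  "mono_of \<gamma> i = (if 1 \<le> i \<and> i \<le> length \<gamma> then \<gamma> ! (i - 1) else 0)"

lemma mono_of:
  assumes "\<forall>a\<in>set \<gamma>. 0 < a"
  shows "monomial (mono_of \<gamma>)" "flat (mono_of \<gamma>) = \<gamma>"
proof -
  have supp: "{i. mono_of \<gamma> i \<noteq> 0} = {1..<Suc (length \<gamma>)}"
    using assms unfolding mono_of_def by (auto simp: nth_mem)
  show "monomial (mono_of \<gamma>)" unfolding monomial_def supp by (simp add: mono_of_def)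
  show "flat (mono_of \<gamma>) = \<gamma>" unfolding flat_def supp sorted_list_of_set_range
    by (rule nth_equalityI) (simp_all add: mono_of_def nth_upt del: upt_Suc)
qed

lemma comp_pos: "\<gamma> \<in> compositions n \<Longrightarrow> \<forall>a\<in>set \<gamma>. 0 < a"
  unfolding compositions_def by auto

lemma length_le_sum_list: "\<forall>a\<in>set (xs::nat list). 0 < a \<Longrightarrow> length xs \<le> sum_list xs"
  by (induction xs) auto

lemma comp_length: "\<gamma> \<in> compositions n \<Longrightarrow> length \<gamma> \<le> n"
  unfolding compositions_def using length_le_sum_list by auto

lemma finite_compositions: "finite (compositions n)"
proof -
  have "compositions n \<subseteq> {xs. set xs \<subseteq> {..n} \<and> length xs \<le> n}"
    using comp_length unfolding compositions_def by (auto simp: member_le_sum_list)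
  thus ?thesis by (rule finite_subset) (rule finite_lists_length_le, simp)
qed

definition Mq :: "nat list \<Rightarrow> fps_x" where
  "Mq \<gamma> m = (if monomial m \<and> flat m = \<gamma> then 1 else 0)"

lemma QSym_expand:
  assumes f: "f \<in> QSym n"
  shows "f m = (\<Sum>\<gamma>\<in>compositions n. f (mono_of \<gamma>) * Mq \<gamma> m)"
proof (cases "monomial m \<and> flat m \<in> compositions n")
  case True
  let ?C = "compositions n"
  have "(\<Sum>\<gamma>\<in>?C. f (mono_of \<gamma>) * Mq \<gamma> m) = (\<Sum>\<gamma>\<in>?C. if \<gamma> = flat m then f (mono_of \<gamma>) else 0)"
    by (rule sum.cong) (use True in \<open>auto simp: Mq_def\<close>)
  also have "\<dots> = f (mono_of (flat m))" using True finite_compositions by (simp add: sum.delta)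
  also have "\<dots> = f m"
  proof -
    have q: "\<forall>m m'. monomial m \<and> monomial m' \<and> flat m = flat m' \<and> flat m \<in> compositions n
                        \<longrightarrow> f m = f m'" using f unfolding QSym_def by blast
    have "monomial (mono_of (flat m))" "flat (mono_of (flat m)) = flat m"
      using mono_of[OF comp_pos[of "flat m" n]] True by auto
    thus ?thesis using q True by metis
  qed
  finally show ?thesis by simp
next
  case False
  have "\<forall>m. f m \<noteq> 0 \<longrightarrow> monomial m \<and> flat m \<in> compositions n" using f unfolding QSym_def by blast
  hence "f m = 0" using False by blast
  moreover have "Mq \<gamma> m = 0" if "\<gamma> \<in> compositions n" for \<gamma> using False that by (auto simp: Mq_def)
  ultimately show ?thesis by simp
qed




lemma ss_verts: "verts (solid_sum_list Gs) = {(j,v). j < length Gs \<and> v \<in> verts (Gs!j)}"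
  unfolding solid_sum_list_def verts_def Let_def by simp

lemma ss_edge: "edge (solid_sum_list Gs) (j,a) (j',b) =
   (if (j,a) \<in> verts (solid_sum_list Gs) \<and> (j',b) \<in> verts (solid_sum_list Gs) then
      (if j = j' then edge (Gs ! j) a b else if j < j' then Some Solid else None) else None)"
  unfolding solid_sum_list_def verts_def edge_def Let_def by simp

lemma strict_into:
  assumes m: "\<And>i j. i < j \<Longrightarrow> j < k \<Longrightarrow> f i < (f j::nat)"
    and r: "\<And>j. j < k \<Longrightarrow> 1 \<le> f j \<and> f j \<le> k"
    and j: "j < k"
  shows "f j = Suc j"
proof -
  have lo: "j < k \<Longrightarrow> Suc j \<le> f j" for j
  proof (induction j)
    case 0 thus ?case using r by simp
  next
    case (Suc j)
    hence "Suc j \<le> f j" by simp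
    moreover have "f j < f (Suc j)" using m Suc by simp
    ultimately show ?case by simp
  qed
  have hi: "d < k \<Longrightarrow> f (k - 1 - d) \<le> k - d" for d
  proof (induction d)
    case 0 thus ?case using r by simp
  next
    case (Suc d)
    hence "f (k - 1 - d) \<le> k - d" by simp
    moreover have "f (k - 1 - Suc d) < f (k - 1 - d)" using m Suc by simp
    ultimately show ?case by simp
  qed
  have "f j \<le> Suc j" using hi[of "k - 1 - j"] j by simp
  thus ?thesis using lo[OF j] by simp
qed

locale fam =
  fixes F :: "nat \<Rightarrow> 'v ecdigraph"
  assumes A1: "\<And>i. i \<ge> 1 \<Longrightarrow> ecdigraph (F i)"
      and A2: "\<And>i. i \<ge> 1 \<Longrightarrow> card (verts (F i)) = i"
      and A3: "\<And>i a b. i \<ge> 1 \<Longrightarrow> edge (F i) a b \<noteq> None \<Longrightarrow> edge (F i) a b = Some Double"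
begin

abbreviation "GG \<alpha> \<equiv> solid_sum_list (map F \<alpha>)"

lemma GV: "verts (GG \<alpha>) = {(j,v). j < length \<alpha> \<and> v \<in> verts (F (\<alpha>!j))}"
  by (auto simp: ss_verts)

lemma GV_Sigma: "verts (GG \<alpha>) = Sigma {..<length \<alpha>} (\<lambda>j. verts (F (\<alpha>!j)))"
  by (auto simp: GV)

lemma GE: "edge (GG \<alpha>) (j,a) (j',b) =
   (if (j,a) \<in> verts (GG \<alpha>) \<and> (j',b) \<in> verts (GG \<alpha>) then
      (if j = j' then edge (F (\<alpha> ! j)) a b else if j < j' then Some Solid else None) else None)"
proof (cases "(j,a) \<in> verts (GG \<alpha>) \<and> (j',b) \<in> verts (GG \<alpha>)")
  case True
  hence "j < length \<alpha>" by (simp add: GV)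
  thus ?thesis using True by (simp add: ss_edge del: if_True)
next
  case False
  show ?thesis unfolding ss_edge using False by (simp only: if_False)
qed

context
  fixes \<alpha> :: "nat list"
  assumes pos: "\<forall>a\<in>set \<alpha>. 0 < a"
begin

lemma cardF: "j < length \<alpha> \<Longrightarrow> card (verts (F (\<alpha>!j))) = \<alpha>!j \<and> 1 \<le> \<alpha>!j"
  using A2 pos by (simp add: Suc_leI nth_mem)

lemma finF: "j < length \<alpha> \<Longrightarrow> finite (verts (F (\<alpha>!j))) \<and> verts (F (\<alpha>!j)) \<noteq> {}"
  using cardF by (metis card.empty card.infinite not_one_le_zero)

lemma finV: "finite (verts (GG \<alpha>))"
  unfolding GV_Sigma using finF by auto

lemma cardV: "card (verts (GG \<alpha>)) = sum_list \<alpha>"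
proof -
  have "card (verts (GG \<alpha>)) = (\<Sum>j<length \<alpha>. card (verts (F (\<alpha>!j))))"
    unfolding GV_Sigma using finF by (simp add: card_SigmaI)
  also have "\<dots> = (\<Sum>j<length \<alpha>. \<alpha>!j)" using cardF by simp
  also have "\<dots> = sum_list \<alpha>" by (simp add: sum_list_sum_nth atLeast0LessThan)
  finally show ?thesis .
qed

lemma Eok: "edge (GG \<alpha>) a b \<noteq> None \<Longrightarrow> a \<in> verts (GG \<alpha>) \<and> b \<in> verts (GG \<alpha>)"
  by (cases a; cases b) (simp add: GE split: if_splits)

lemma GQSym: "chromX (GG \<alpha>) \<in> QSym (sum_list \<alpha>)"
  using chromX_QSym[OF finV Eok] cardV by simp

lemma block:
  assumes gpos: "\<forall>a\<in>set \<gamma>. 0 < a"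
    and k: "\<kappa> \<in> colset (GG \<alpha>) (mono_of \<gamma>)"
  shows "length \<alpha> \<le> length \<gamma> \<and> (length \<alpha> = length \<gamma> \<longrightarrow>
            \<gamma> = \<alpha> \<and> (\<forall>j v. (j,v) \<in> verts (GG \<alpha>) \<longrightarrow> \<kappa> (j,v) = Suc j))"
proof -
  let ?V = "verts (GG \<alpha>)"
  let ?k = "length \<alpha>" and ?l = "length \<gamma>"
  have pk: "proper_colouring (GG \<alpha>) \<kappa>" and ck: "\<And>j. card {a \<in> ?V. \<kappa> a = j} = mono_of \<gamma> j"
    using k unfolding colset_def by auto
  have solid: "\<kappa> (i,a) < \<kappa> (j,b)" if "(i,a) \<in> ?V" "(j,b) \<in> ?V" "i < j" for i j a b
  proof -
    have "edge (GG \<alpha>) (i,a) (j,b) = Some Solid" using that by (simp add: GE)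
    thus ?thesis using pk unfolding proper_colouring_def by blast
  qed
  have rng: "1 \<le> \<kappa> a \<and> \<kappa> a \<le> ?l" if "a \<in> ?V" for a
    using colset_range[OF finV k that] unfolding mono_of_def by (auto split: if_splits)
  define c where "c j = Min ((\<lambda>v. \<kappa> (j,v)) ` verts (F (\<alpha>!j)))" for j
  have cmin: "\<exists>v. (j,v) \<in> ?V \<and> \<kappa> (j,v) = c j \<and> (\<forall>w. (j,w) \<in> ?V \<longrightarrow> c j \<le> \<kappa> (j,w))"
    if j: "j < ?k" for j
  proof -
    have "c j \<in> (\<lambda>v. \<kappa> (j,v)) ` verts (F (\<alpha>!j))" unfolding c_def using finF[OF j] by (intro Min_in) auto
    then obtain v where "v \<in> verts (F (\<alpha>!j))" "\<kappa> (j,v) = c j" by auto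
    moreover have "\<forall>w. (j,w) \<in> ?V \<longrightarrow> c j \<le> \<kappa> (j,w)" unfolding c_def using finF[OF j] by (auto simp: GV)
    ultimately show ?thesis using j by (auto simp: GV)
  qed
  have cm: "c i < c j" if ij: "i < j" "j < ?k" for i j
  proof -
    obtain vi where vi: "(i,vi) \<in> ?V" "\<kappa> (i,vi) = c i" using cmin[of i] ij by auto
    obtain vj where vj: "(j,vj) \<in> ?V" "\<kappa> (j,vj) = c j" using cmin[of j] ij by auto
    show ?thesis using solid[OF vi(1) vj(1) ij(1)] vi vj by simp
  qed
  have cr: "1 \<le> c j \<and> c j \<le> ?l" if j: "j < ?k" for j
  proof -
    obtain v where v: "(j,v) \<in> ?V" "\<kappa> (j,v) = c j" using cmin[OF j] by auto
    show ?thesis using rng[OF v(1)] v(2) by simp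
  qed
  have "inj_on c {..<?k}"
  proof (rule inj_onI)
    fix x y assume x: "x \<in> {..<?k}" and y: "y \<in> {..<?k}" and e: "c x = c y"
    show "x = y"
    proof (rule ccontr)
      assume "x \<noteq> y"
      hence "x < y \<or> y < x" by auto
      thus False using cm[of x y] cm[of y x] x y e by auto
    qed
  qed
  moreover have "c ` {..<?k} \<subseteq> {1..?l}" using cr by auto
  ultimately have "card {..<?k} \<le> card {1..?l}" by (intro card_inj_on_le) auto
  hence le: "?k \<le> ?l" by simp
  moreover have "\<gamma> = \<alpha> \<and> (\<forall>j v. (j,v) \<in> ?V \<longrightarrow> \<kappa> (j,v) = Suc j)" if eq: "?k = ?l"
  proof -
    have cj: "c j = Suc j" if "j < ?k" for j
      by (rule strict_into[of ?k c]) (use cm cr eq that in auto)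
    have kv: "\<kappa> (j,v) = Suc j" if jv: "(j,v) \<in> ?V" for j v
    proof -
      have j: "j < ?k" using jv by (simp add: GV)
      have "Suc j \<le> \<kappa> (j,v)" using cmin[OF j] cj[OF j] jv by auto
      moreover have "\<kappa> (j,v) \<le> Suc j"
      proof (cases "Suc j < ?k")
        case True
        obtain w where w: "(Suc j, w) \<in> ?V" "\<kappa> (Suc j, w) = c (Suc j)" using cmin[OF True] by auto
        hence "(Suc j, w) \<in> ?V" "\<kappa> (Suc j, w) = Suc (Suc j)" using cj[OF True] by auto
        thus ?thesis using solid[OF jv, of "Suc j" w] by simp
      next
        case False
        thus ?thesis using rng[OF jv] eq j by simp
      qed
      ultimately show ?thesis by simp
    qed
    have "\<gamma> ! j = \<alpha> ! j" if j: "j < ?l" for j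
    proof -
      have "\<gamma> ! j = mono_of \<gamma> (Suc j)" using j by (simp add: mono_of_def)
      also have "\<dots> = card {a \<in> ?V. \<kappa> a = Suc j}" using ck by simp
      also have "{a \<in> ?V. \<kappa> a = Suc j} = (\<lambda>v. (j,v)) ` verts (F (\<alpha>!j))"
        using kv j eq by (auto simp: GV)
      also have "card \<dots> = \<alpha> ! j" using cardF[of j] j eq by (simp add: card_image inj_on_def)
      finally show ?thesis .
    qed
    hence "\<gamma> = \<alpha>" using eq by (intro nth_equalityI) auto
    thus ?thesis using kv by blast
  qed
  ultimately show ?thesis by blast
qed

lemma diag: "chromX (GG \<alpha>) (mono_of \<alpha>) = 1"
proof -
  let ?V = "verts (GG \<alpha>)"
  define \<kappa>0 where "\<kappa>0 = restrict (\<lambda>(j,v). Suc j) ?V"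
  have in0: "\<kappa>0 \<in> colset (GG \<alpha>) (mono_of \<alpha>)"
  proof -
    have p: "proper_colouring (GG \<alpha>) \<kappa>0"
      unfolding proper_colouring_def
    proof (intro conjI allI ballI)
      fix a assume "a \<in> ?V" thus "1 \<le> \<kappa>0 a" unfolding \<kappa>0_def by (auto split: prod.splits)
    next
      fix a b :: "nat \<times> 'v"
      obtain i x j y where ab: "a = (i,x)" "b = (j,y)" by (cases a, cases b)
      have dbl: "edge (F (\<alpha>!i)) x y \<noteq> None \<Longrightarrow> edge (F (\<alpha>!i)) x y = Some Double" if "i < length \<alpha>"
        using A3 cardF[OF that] by blast
      show "edge (GG \<alpha>) a b = Some Dashed \<longrightarrow> \<kappa>0 a \<noteq> \<kappa>0 b"
        using dbl unfolding ab by (auto simp: GE GV split: if_splits)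
      show "edge (GG \<alpha>) a b = Some Solid \<longrightarrow> \<kappa>0 a < \<kappa>0 b"
        using dbl unfolding ab by (auto simp: GE GV \<kappa>0_def split: if_splits)
      show "edge (GG \<alpha>) a b = Some Double \<longrightarrow> \<kappa>0 a \<le> \<kappa>0 b"
        using dbl unfolding ab by (auto simp: GE GV \<kappa>0_def split: if_splits)
    qed
    have c: "card {a \<in> ?V. \<kappa>0 a = i} = mono_of \<alpha> i" for i
    proof (cases "1 \<le> i \<and> i \<le> length \<alpha>")
      case True
      have "{a \<in> ?V. \<kappa>0 a = i} = (\<lambda>v. (i - 1, v)) ` verts (F (\<alpha>!(i-1)))"
        using True by (auto simp: GV \<kappa>0_def image_iff)
      moreover have "card \<dots> = \<alpha>!(i-1)"
      proof -
        have "i - 1 < length \<alpha>" using True by arith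
        thus ?thesis using cardF[of "i - 1"] by (simp add: card_image inj_on_def)
      qed
      ultimately show ?thesis using True by (simp add: mono_of_def)
    next
      case False
      have "{a \<in> ?V. \<kappa>0 a = i} = {}" using False by (auto simp: GV \<kappa>0_def)
      moreover have "mono_of \<alpha> i = 0" using False unfolding mono_of_def by auto
      ultimately show ?thesis by (metis card.empty)
    qed
    show ?thesis unfolding colset_def using p c by (auto simp: \<kappa>0_def)
  qed
  have "colset (GG \<alpha>) (mono_of \<alpha>) = {\<kappa>0}"
  proof (intro set_eqI iffI)
    fix \<kappa> assume k: "\<kappa> \<in> colset (GG \<alpha>) (mono_of \<alpha>)"
    have "\<kappa> = \<kappa>0"
    proof (rule PiE_ext)
      show "\<kappa> \<in> ?V \<rightarrow>\<^sub>E UNIV" using k unfolding colset_def by auto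
      show "\<kappa>0 \<in> ?V \<rightarrow>\<^sub>E UNIV" unfolding \<kappa>0_def by auto
      fix a assume a: "a \<in> ?V"
      obtain j v where "a = (j,v)" by (cases a)
      thus "\<kappa> a = \<kappa>0 a" using block[OF pos k] a unfolding \<kappa>0_def by auto
    qed
    thus "\<kappa> \<in> {\<kappa>0}" by simp
  next
    fix \<kappa> assume "\<kappa> \<in> {\<kappa>0}" thus "\<kappa> \<in> colset (GG \<alpha>) (mono_of \<alpha>)" using in0 by simp
  qed
  thus ?thesis unfolding chromX_colset by simp
qed

lemma offdiag:
  assumes gpos: "\<forall>a\<in>set \<gamma>. 0 < a" and nz: "chromX (GG \<alpha>) (mono_of \<gamma>) \<noteq> 0" and ne: "\<gamma> \<noteq> \<alpha>"
  shows "length \<alpha> < length \<gamma>"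
proof -
  obtain \<kappa> where "\<kappa> \<in> colset (GG \<alpha>) (mono_of \<gamma>)" using nz unfolding chromX_colset by fastforce
  from block[OF gpos this] ne show ?thesis by auto
qed

end
end



context fam
begin

context
  fixes n :: nat
begin

definition inspan :: "fps_x \<Rightarrow> bool" where
  "inspan g \<longleftrightarrow> (\<exists>c. \<forall>m. g m = (\<Sum>\<alpha>\<in>compositions n. c \<alpha> * chromX (GG \<alpha>) m))"

lemma span_comb:
  assumes fin: "finite X" and h: "\<forall>x\<in>X. inspan (g x)"
  shows "inspan (\<lambda>m. \<Sum>x\<in>X. a x * g x m)"
proof -
  let ?C = "compositions n"
  have "\<forall>x\<in>X. \<exists>c. \<forall>m. g x m = (\<Sum>\<alpha>\<in>?C. c \<alpha> * chromX (GG \<alpha>) m)" using h unfolding inspan_def by blast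
  from bchoice[OF this] obtain cc where cc0: "\<forall>x\<in>X. \<forall>m. g x m = (\<Sum>\<alpha>\<in>?C. cc x \<alpha> * chromX (GG \<alpha>) m)"
    by blast
  hence cc: "\<And>x m. x \<in> X \<Longrightarrow> g x m = (\<Sum>\<alpha>\<in>?C. cc x \<alpha> * chromX (GG \<alpha>) m)" by blast
  show ?thesis unfolding inspan_def
  proof (intro exI allI)
    fix m
    have "(\<Sum>x\<in>X. a x * g x m) = (\<Sum>x\<in>X. \<Sum>\<alpha>\<in>?C. a x * (cc x \<alpha> * chromX (GG \<alpha>) m))"
      using cc by (simp add: sum_distrib_left)
    also have "\<dots> = (\<Sum>\<alpha>\<in>?C. \<Sum>x\<in>X. a x * (cc x \<alpha> * chromX (GG \<alpha>) m))" by (rule sum.swap)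
    also have "\<dots> = (\<Sum>\<alpha>\<in>?C. (\<Sum>x\<in>X. a x * cc x \<alpha>) * chromX (GG \<alpha>) m)"
      by (simp add: sum_distrib_right mult.assoc)
    finally show "(\<Sum>x\<in>X. a x * g x m) = (\<Sum>\<alpha>\<in>?C. (\<Sum>x\<in>X. a x * cc x \<alpha>) * chromX (GG \<alpha>) m)" .
  qed
qed

lemma span_diff:
  assumes "inspan g1" "inspan g2"
  shows "inspan (\<lambda>m. g1 m - g2 m)"
proof -
  obtain c1 c2 where c1: "\<forall>m. g1 m = (\<Sum>\<alpha>\<in>compositions n. c1 \<alpha> * chromX (GG \<alpha>) m)"
    and c2: "\<forall>m. g2 m = (\<Sum>\<alpha>\<in>compositions n. c2 \<alpha> * chromX (GG \<alpha>) m)"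
    using assms unfolding inspan_def by blast
  show ?thesis unfolding inspan_def
    by (rule exI[of _ "\<lambda>\<alpha>. c1 \<alpha> - c2 \<alpha>"]) (simp add: c1 c2 sum_subtractf left_diff_distrib)
qed

lemma span_B:
  assumes "\<alpha> \<in> compositions n"
  shows "inspan (chromX (GG \<alpha>))"
  unfolding inspan_def
proof (intro exI[of _ "\<lambda>\<beta>. if \<beta> = \<alpha> then 1 else 0"] allI)
  fix m
  have "(\<Sum>\<beta>\<in>compositions n. (if \<beta> = \<alpha> then 1 else 0) * chromX (GG \<beta>) m)
      = (\<Sum>\<beta>\<in>compositions n. if \<beta> = \<alpha> then chromX (GG \<beta>) m else 0)"
    by (rule sum.cong) auto
  also have "\<dots> = chromX (GG \<alpha>) m" using assms finite_compositions by (simp add: sum.delta)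
  finally show "chromX (GG \<alpha>) m = (\<Sum>\<beta>\<in>compositions n. (if \<beta> = \<alpha> then 1 else 0) * chromX (GG \<beta>) m)" by simp
qed

lemma M_span: "\<gamma> \<in> compositions n \<Longrightarrow> inspan (Mq \<gamma>)"
proof (induction \<gamma> rule: measure_induct_rule[of "\<lambda>\<gamma>. n - length \<gamma>"])
  case (less \<gamma>)
  let ?C = "compositions n"
  let ?T = "\<lambda>\<alpha> \<gamma>. chromX (GG \<alpha>) (mono_of \<gamma>)"
  have g: "\<gamma> \<in> ?C" by fact
  have gpos: "\<forall>a\<in>set \<gamma>. 0 < a" using comp_pos[OF g] .
  have sg: "sum_list \<gamma> = n" using g unfolding compositions_def by simp
  have exp: "chromX (GG \<gamma>) m = (\<Sum>\<gamma>'\<in>?C. ?T \<gamma> \<gamma>' * Mq \<gamma>' m)" for m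
    using QSym_expand[of "chromX (GG \<gamma>)" n m] GQSym[OF gpos] sg by simp
  define X where "X = {\<gamma>'\<in>?C. \<gamma>' \<noteq> \<gamma> \<and> ?T \<gamma> \<gamma>' \<noteq> 0}"
  have finX: "finite X" unfolding X_def using finite_compositions by simp
  have Xspan: "\<forall>x\<in>X. inspan (Mq x)"
  proof
    fix x assume x: "x \<in> X"
    hence xc: "x \<in> ?C" and "x \<noteq> \<gamma>" "?T \<gamma> x \<noteq> 0" unfolding X_def by auto
    hence "length \<gamma> < length x" using offdiag[OF gpos comp_pos[OF xc]] by blast
    moreover have "length x \<le> n" using comp_length[OF xc] .
    ultimately have "n - length x < n - length \<gamma>" by simp
    thus "inspan (Mq x)" using less.IH xc by blast
  qed
  have eq: "Mq \<gamma> = (\<lambda>m. chromX (GG \<gamma>) m - (\<Sum>x\<in>X. ?T \<gamma> x * Mq x m))"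
  proof
    fix m
    have "(\<Sum>\<gamma>'\<in>?C. ?T \<gamma> \<gamma>' * Mq \<gamma>' m) = ?T \<gamma> \<gamma> * Mq \<gamma> m + (\<Sum>\<gamma>'\<in>?C - {\<gamma>}. ?T \<gamma> \<gamma>' * Mq \<gamma>' m)"
      using g finite_compositions by (simp add: sum.remove)
    also have "(\<Sum>\<gamma>'\<in>?C - {\<gamma>}. ?T \<gamma> \<gamma>' * Mq \<gamma>' m) = (\<Sum>x\<in>X. ?T \<gamma> x * Mq x m)"
      by (rule sum.mono_neutral_right) (auto simp: X_def finite_compositions)
    finally show "Mq \<gamma> m = chromX (GG \<gamma>) m - (\<Sum>x\<in>X. ?T \<gamma> x * Mq x m)"
      using exp[of m] diag[OF gpos] by simp
  qed
  show ?case unfolding eq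
    by (rule span_diff[OF span_B[OF g] span_comb[OF finX Xspan]])
qed

lemma indep:
  assumes h: "\<forall>m. (\<Sum>\<alpha>\<in>compositions n. c \<alpha> * chromX (GG \<alpha>) m) = 0"
  shows "\<alpha> \<in> compositions n \<Longrightarrow> c \<alpha> = 0"
proof (induction \<alpha> rule: measure_induct_rule[of length])
  case (less \<alpha>)
  let ?C = "compositions n"
  let ?T = "\<lambda>\<alpha> \<gamma>. chromX (GG \<alpha>) (mono_of \<gamma>)"
  have a: "\<alpha> \<in> ?C" by fact
  have apos: "\<forall>a\<in>set \<alpha>. 0 < a" using comp_pos[OF a] .
  have z: "(\<Sum>\<alpha>'\<in>?C - {\<alpha>}. c \<alpha>' * ?T \<alpha>' \<alpha>) = 0"
  proof (rule sum.neutral, rule ballI)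
    fix \<alpha>' assume a': "\<alpha>' \<in> ?C - {\<alpha>}"
    show "c \<alpha>' * ?T \<alpha>' \<alpha> = 0"
    proof (cases "?T \<alpha>' \<alpha> = 0")
      case False
      hence "length \<alpha>' < length \<alpha>" using offdiag[OF comp_pos[of \<alpha>' n] apos False] a' by auto
      hence "c \<alpha>' = 0" using less.IH a' by blast
      thus ?thesis by simp
    qed simp
  qed
  have "0 = (\<Sum>\<alpha>'\<in>?C. c \<alpha>' * ?T \<alpha>' \<alpha>)" using h by simp
  also have "\<dots> = c \<alpha> * ?T \<alpha> \<alpha> + (\<Sum>\<alpha>'\<in>?C - {\<alpha>}. c \<alpha>' * ?T \<alpha>' \<alpha>)"
    using a finite_compositions by (simp add: sum.remove)
  also have "\<dots> = c \<alpha>" using z diag[OF apos] by simp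
  finally show ?case by simp
qed

lemma basis: "is_QSym_basis n (\<lambda>\<alpha>. chromX (GG \<alpha>))"
  unfolding is_QSym_basis_def
proof (intro conjI ballI allI impI)
  fix \<alpha> assume a: "\<alpha> \<in> compositions n"
  show "chromX (GG \<alpha>) \<in> QSym n"
    using GQSym[OF comp_pos[OF a]] a unfolding compositions_def by simp
next
  fix c \<alpha> assume "\<forall>m. (\<Sum>\<alpha>\<in>compositions n. c \<alpha> * chromX (GG \<alpha>) m) = 0" "\<alpha> \<in> compositions n"
  thus "c \<alpha> = 0" using indep by blast
next
  fix f assume f: "f \<in> QSym n"
  have "inspan (\<lambda>m. \<Sum>\<gamma>\<in>compositions n. f (mono_of \<gamma>) * Mq \<gamma> m)"
  proof (rule span_comb[OF finite_compositions])
    show "\<forall>x\<in>compositions n. inspan (Mq x)" using M_span by blast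
  qed
  moreover have "(\<lambda>m. \<Sum>\<gamma>\<in>compositions n. f (mono_of \<gamma>) * Mq \<gamma> m) = f"
    by (rule ext, rule QSym_expand[OF f, symmetric])
  ultimately have "inspan f" by simp
  thus "\<exists>c. \<forall>m. f m = (\<Sum>\<alpha>\<in>compositions n. c \<alpha> * chromX (GG \<alpha>) m)" unfolding inspan_def .
qed

end
end

theorem mainTheorem7:
  fixes F :: "nat \<Rightarrow> 'v ecdigraph" and n :: nat
  assumes "\<And>i. i \<ge> 1 \<Longrightarrow> ecdigraph (F i)"
      and "\<And>i. i \<ge> 1 \<Longrightarrow> card (verts (F i)) = i"
      and "\<And>i a b. i \<ge> 1 \<Longrightarrow> edge (F i) a b \<noteq> None \<Longrightarrow> edge (F i) a b = Some Double"
  shows "is_QSym_basis n (\<lambda>\<alpha>. chromX (solid_sum_list (map F \<alpha>)))"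
proof -
  interpret fam F using assms by unfold_locales
  show ?thesis using basis .
qed


end
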